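(* Let $1 \leq p < \infty$, let $T : \ell_p \to \ell_p$ be a bounded linear operator and let $x_0 \in \ell_p$. If there exists $k \in \mathbb{N}$ such that $\underline{\mathrm{d}}(\{n \in \mathbb{N} : \pi_k(T^n x_0) = 0\}) = 1$, then $x_0$ is not a $\mathscr{U}$-frequently hypercyclic vector for $T$.
   Context: $\pi_k((z_n)_{n\ge1}) = z_k$ denotes the $k$-th coordinate. For $A \subset \mathbb{N}_0 = \{0,1,2,\dots\}$, $\underline{\mathrm{d}}(A) = \liminf_{N\to\infty} \frac{|A \cap \{0,\dots,N\}|}{N+1}$ and $\overline{\mathrm{d}}(A) = \limsup_{N\to\infty} \frac{|A \cap \{0,\dots,N\}|}{N+1}$. A vector $x$ is $\mathscr{U}$-frequently hypercyclic for $T$ if for every non-empty open $U \subset \ell_p$ the set $\{n \in \mathbb{N}_0 : T^n x \in U\}$ has positive upper density. *)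

theory Defs
  imports "HOL-Analysis.Analysis" "HOL-Library.Liminf_Limsup"
begin

text \<open>The sequence space l_p over a normed field; sequences are indexed by nat
  (index 0 corresponds to the first coordinate z_1 of the paper).\<close>

definition lp_space :: "real \<Rightarrow> (nat \<Rightarrow> 'a::real_normed_field) set" where
  "lp_space p = {x. summable (\<lambda>n. norm (x n) powr p)}"

definition lp_norm :: "real \<Rightarrow> (nat \<Rightarrow> 'a::real_normed_field) \<Rightarrow> real" where
  "lp_norm p x = (\<Sum>n. norm (x n) powr p) powr (1 / p)"

definition lp_open :: "real \<Rightarrow> (nat \<Rightarrow> 'a::real_normed_field) set \<Rightarrow> bool" where
  "lp_open p U \<longleftrightarrow> U \<subseteq> lp_space p \<and>
     (\<forall>x\<in>U. \<exists>e>0. \<forall>y\<in>lp_space p. lp_norm p (\<lambda>n. y n - x n) < e \<longrightarrow> y \<in> U)"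

definition lp_bounded_linear ::
  "real \<Rightarrow> ((nat \<Rightarrow> 'a::real_normed_field) \<Rightarrow> (nat \<Rightarrow> 'a)) \<Rightarrow> bool" where
  "lp_bounded_linear p T \<longleftrightarrow>
     (\<forall>x\<in>lp_space p. T x \<in> lp_space p) \<and>
     (\<forall>x\<in>lp_space p. \<forall>y\<in>lp_space p. T (\<lambda>n. x n + y n) = (\<lambda>n. T x n + T y n)) \<and>
     (\<forall>c. \<forall>x\<in>lp_space p. T (\<lambda>n. c * x n) = (\<lambda>n. c * T x n)) \<and>
     (\<exists>C. \<forall>x\<in>lp_space p. lp_norm p (T x) \<le> C * lp_norm p x)"

definition lower_density :: "nat set \<Rightarrow> ereal" where
  "lower_density A = liminf (\<lambda>N. ereal (real (card (A \<inter> {0..N})) / real (N + 1)))"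

definition upper_density :: "nat set \<Rightarrow> ereal" where
  "upper_density A = limsup (\<lambda>N. ereal (real (card (A \<inter> {0..N})) / real (N + 1)))"

definition U_frequently_hypercyclic ::
  "real \<Rightarrow> ((nat \<Rightarrow> 'a::real_normed_field) \<Rightarrow> (nat \<Rightarrow> 'a)) \<Rightarrow> (nat \<Rightarrow> 'a) \<Rightarrow> bool" where
  "U_frequently_hypercyclic p T x \<longleftrightarrow> x \<in> lp_space p \<and>
     (\<forall>U. lp_open p U \<and> U \<noteq> {} \<longrightarrow> upper_density {n. (T ^^ n) x \<in> U} > 0)"

end

theory Submission
  imports Defs
begin

lemma lp_diff:
  assumes "p \<ge> 1" "x \<in> lp_space p" "y \<in> lp_space p"
  shows "(\<lambda>n. y n - x n) \<in> lp_space p"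
proof -
  have b: "norm (y n - x n) powr p \<le> 2 powr p * (norm (y n) powr p + norm (x n) powr p)" for n
  proof -
    let ?m = "max (norm (y n)) (norm (x n))"
    have "norm (y n - x n) \<le> 2 * ?m" using norm_triangle_ineq4[of "y n" "x n"] by linarith
    hence "norm (y n - x n) powr p \<le> (2 * ?m) powr p" using assms(1) by (simp add: powr_mono2)
    also have "\<dots> = 2 powr p * ?m powr p" by (simp add: powr_mult)
    also have "?m powr p \<le> norm (y n) powr p + norm (x n) powr p"
      by (cases "norm (y n) \<le> norm (x n)") (auto simp: max_def)
    hence "2 powr p * ?m powr p \<le> 2 powr p * (norm (y n) powr p + norm (x n) powr p)"
      by (simp add: mult_left_mono)
    finally show ?thesis .
  qed
  have "summable (\<lambda>n. 2 powr p * (norm (y n) powr p + norm (x n) powr p))"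
    using assms(2,3) by (intro summable_mult summable_add) (auto simp: lp_space_def)
  then have "summable (\<lambda>n. norm (y n - x n) powr p)"
    by (rule summable_comparison_test[rotated]) (use b in auto)
  thus ?thesis by (simp add: lp_space_def)
qed

lemma lp_coord:
  assumes "p \<ge> 1" "z \<in> lp_space p"
  shows "norm (z k) \<le> lp_norm p z"
proof -
  have s: "summable (\<lambda>n. norm (z n) powr p)" using assms by (simp add: lp_space_def)
  have "sum (\<lambda>n. norm (z n) powr p) {k} \<le> (\<Sum>n. norm (z n) powr p)"
    by (rule sum_le_suminf[OF s]) auto
  hence "norm (z k) powr p \<le> (\<Sum>n. norm (z n) powr p)" by simp
  hence "(norm (z k) powr p) powr (1/p) \<le> (\<Sum>n. norm (z n) powr p) powr (1/p)"
    using assms(1) by (intro powr_mono2) auto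
  moreover have "(norm (z k) powr p) powr (1/p) = norm (z k)"
    using assms(1) by (simp add: powr_powr)
  ultimately show ?thesis by (simp add: lp_norm_def)
qed

theorem lemma2p1:
  fixes p :: real and T :: "(nat \<Rightarrow> 'a::real_normed_field) \<Rightarrow> (nat \<Rightarrow> 'a)"
    and x0 :: "nat \<Rightarrow> 'a"
  assumes "1 \<le> p"
    and "lp_bounded_linear p T"
    and "x0 \<in> lp_space p"
    and "\<exists>k. lower_density {n. (T ^^ n) x0 k = 0} = 1"
  shows "\<not> U_frequently_hypercyclic p T x0"
proof
  assume H: "U_frequently_hypercyclic p T x0"
  obtain k where k: "lower_density {n. (T ^^ n) x0 k = 0} = 1" using assms(4) by blast
  define A where "A = {n. (T ^^ n) x0 k = 0}"
  define U where "U = {y \<in> lp_space p. y k \<noteq> (0::'a)}"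
  have Uo: "lp_open p U" unfolding lp_open_def
  proof (intro conjI ballI)
    show "U \<subseteq> lp_space p" by (auto simp: U_def)
    fix x assume x: "x \<in> U"
    show "\<exists>e>0. \<forall>y\<in>lp_space p. lp_norm p (\<lambda>n. y n - x n) < e \<longrightarrow> y \<in> U"
    proof (intro exI[of _ "norm (x k)"] conjI ballI impI)
      show "norm (x k) > 0" using x by (auto simp: U_def)
      fix y assume y: "y \<in> lp_space p" and l: "lp_norm p (\<lambda>n. y n - x n) < norm (x k)"
      have "norm (y k - x k) \<le> lp_norm p (\<lambda>n. y n - x n)"
        using lp_coord[OF assms(1) lp_diff[OF assms(1) _ y], of x k] x by (auto simp: U_def)
      with l have "y k \<noteq> 0" by auto
      thus "y \<in> U" using y by (simp add: U_def)
    qed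
  qed
  have "(\<lambda>n. if n = k then 1 else 0 :: 'a) \<in> U"
  proof -
    have "summable (\<lambda>n. norm (if n = k then 1 else 0 :: 'a) powr p)"
      by (rule summable_finite[of "{k}"]) auto
    thus ?thesis by (simp add: U_def lp_space_def)
  qed
  hence Une: "U \<noteq> {}" by auto
  define B where "B = {n. (T ^^ n) x0 \<in> U}"
  have BA: "B \<inter> A = {}" by (auto simp: A_def B_def U_def)
  define r where "r = (\<lambda>S N. real (card (S \<inter> {0..N})) / real (N + 1))"
  have r01: "0 \<le> r S N \<and> r S N \<le> 1" for S N
  proof -
    have "card (S \<inter> {0..N}) \<le> card {0..N}" by (rule card_mono) auto
    thus ?thesis by (simp add: r_def)
  qed
  have rB: "r B N \<le> 1 - r A N" for N
  proof -
    have "card (B \<inter> {0..N}) + card (A \<inter> {0..N}) = card ((B \<inter> {0..N}) \<union> (A \<inter> {0..N}))"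
      using BA by (intro card_Un_disjoint[symmetric]) auto
    also have "\<dots> \<le> card {0..N}" by (rule card_mono) auto
    finally have "real (card (B \<inter> {0..N})) + real (card (A \<inter> {0..N})) \<le> real N + 1" by simp
    hence "real (card (B \<inter> {0..N})) \<le> (real N + 1) - real (card (A \<inter> {0..N}))" by linarith
    hence "real (card (B \<inter> {0..N})) / (real N + 1) \<le> ((real N + 1) - real (card (A \<inter> {0..N}))) / (real N + 1)"
      by (intro divide_right_mono) auto
    also have "\<dots> = 1 - real (card (A \<inter> {0..N})) / (real N + 1)" by (simp add: diff_divide_distrib)
    finally show ?thesis by (simp add: r_def add.commute)
  qed
  have li: "liminf (\<lambda>N. ereal (r A N)) = 1" using k by (simp add: lower_density_def A_def r_def)
  have ls: "limsup (\<lambda>N. ereal (r A N)) \<le> 1"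
    by (rule Limsup_bounded) (use r01 in auto)
  have "limsup (\<lambda>N. ereal (r A N)) \<ge> 1" using li Liminf_le_Limsup[of sequentially "\<lambda>N. ereal (r A N)"] by simp
  with ls li have "(\<lambda>N. ereal (r A N)) \<longlonglongrightarrow> 1"
    by (simp add: tendsto_iff_Liminf_eq_Limsup)
  hence rA: "(\<lambda>N. r A N) \<longlonglongrightarrow> 1" by (simp add: one_ereal_def lim_ereal)
  have "(\<lambda>N. r B N) \<longlonglongrightarrow> 0"
  proof (rule tendsto_sandwich[of "\<lambda>_. 0" _ _ "\<lambda>N. 1 - r A N"])
    show "\<forall>\<^sub>F n in sequentially. 0 \<le> r B n" using r01 by auto
    show "\<forall>\<^sub>F n in sequentially. r B n \<le> 1 - r A n" using rB by auto
    show "(\<lambda>N. 1 - r A N) \<longlonglongrightarrow> 0" using tendsto_diff[OF tendsto_const rA, of 1] by simp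
  qed auto
  hence "(\<lambda>N. ereal (r B N)) \<longlonglongrightarrow> 0" by (simp add: zero_ereal_def lim_ereal)
  hence "limsup (\<lambda>N. ereal (r B N)) = 0" by (simp add: lim_imp_Limsup)
  hence "upper_density B = 0" by (simp add: upper_density_def r_def)
  moreover have "upper_density B > 0" using H Uo Une by (simp add: U_frequently_hypercyclic_def B_def)
  ultimately show False by simp
qed

end
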